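(* The multi-observation inverse optimization model $\mathbf{IO}(\mathbf{X})$ is feasible.
   Context: Forward problem $\mathbf{FO}(\mathbf{c})$: maximize $\mathbf{c}'\mathbf{x}$ subject to $\mathbf{A}\mathbf{x}\ge\mathbf{b}$ (relevant constraints, $\mathbf{A}\in\mathbb{R}^{m_1\times n}$, $m_1\ge1$, rows $\mathbf{a}_j$), $\mathbf{W}\mathbf{x}\ge\mathbf{q}$ (trivial constraints), $\mathbf{x}\in\mathbb{R}^n$. Its feasible region $\chi$ is assumed nonempty, full-dimensional and free of redundant constraints. Given observations $\mathbf{X}=\{\mathbf{x}^k\in\mathbb{R}^n: k\in\mathcal{K}=\{1,\dots,K\}\}$ (feasible or infeasible), the multi-observation inverse optimization model is $\mathbf{IO}(\mathbf{X})$: minimize over $\mathbf{c},\mathbf{y},\mathbf{E},\mathbf{z}$ the distance measure $\mathscr{D}(\mathbf{E},\mathbf{A})\ge 0$ subject to $\mathbf{A}\mathbf{z}\ge\mathbf{b}$, $\mathbf{W}\mathbf{z}\ge\mathbf{q}$, $\mathbf{c}'\mathbf{z}=\mathbf{b}'\mathbf{y}$, $\mathbf{z}=\mathbf{x}^k-\epsilon^k$ for all $k\in\mathcal{K}$, $\mathbf{A}'\mathbf{y}=\mathbf{c}$, $\|\mathbf{c}\|_L=1$, $\mathbf{y}\ge\mathbf{0}$, with $\mathbf{c},\mathbf{z}\in\mathbb{R}^n$, $\mathbf{y}\in\mathbb{R}^{m_1}$, $\mathbf{E}\in\mathbb{R}^{n\times K}$ whose $k$-th column is $\epsilon^k$.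 *)

theory Defs
  imports "HOL-Analysis.Analysis"
begin

text \<open>Feasible region chi of FO: A x >= b (relevant, rows indexed by 'm),
  W x >= q (trivial, rows indexed by 'p), componentwise.\<close>
definition feasible_region ::
  "real^'n^'m \<Rightarrow> real^'m \<Rightarrow> real^'n^'p \<Rightarrow> real^'p \<Rightarrow> (real^'n) set" where
  "feasible_region A b W q =
     {x. (\<forall>i. (A *v x)$i \<ge> b$i) \<and> (\<forall>l. (W *v x)$l \<ge> q$l)}"

definition region_without_relevant ::
  "real^'n^'m \<Rightarrow> real^'m \<Rightarrow> real^'n^'p \<Rightarrow> real^'p \<Rightarrow> 'm \<Rightarrow> (real^'n) set" where
  "region_without_relevant A b W q j =
     {x. (\<forall>i. i \<noteq> j \<longrightarrow> (A *v x)$i \<ge> b$i) \<and> (\<forall>l. (W *v x)$l \<ge> q$l)}"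

definition region_without_trivial ::
  "real^'n^'m \<Rightarrow> real^'m \<Rightarrow> real^'n^'p \<Rightarrow> real^'p \<Rightarrow> 'p \<Rightarrow> (real^'n) set" where
  "region_without_trivial A b W q l0 =
     {x. (\<forall>i. (A *v x)$i \<ge> b$i) \<and> (\<forall>l. l \<noteq> l0 \<longrightarrow> (W *v x)$l \<ge> q$l)}"

definition no_redundant_constraints ::
  "real^'n^'m \<Rightarrow> real^'m \<Rightarrow> real^'n^'p \<Rightarrow> real^'p \<Rightarrow> bool" where
  "no_redundant_constraints A b W q \<longleftrightarrow>
     (\<forall>j. region_without_relevant A b W q j \<noteq> feasible_region A b W q) \<and>
     (\<forall>l. region_without_trivial A b W q l \<noteq> feasible_region A b W q)"

definition is_norm :: "(real^'n \<Rightarrow> real) \<Rightarrow> bool" where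
  "is_norm N \<longleftrightarrow>
     (\<forall>x. N x \<ge> 0) \<and> (\<forall>x. N x = 0 \<longleftrightarrow> x = 0) \<and>
     (\<forall>a x. N (a *\<^sub>R x) = \<bar>a\<bar> * N x) \<and> (\<forall>x y. N (x + y) \<le> N x + N y)"

text \<open>Feasibility of IO(X): existence of (c, y, E, z) satisfying all constraints.
  X k is the k-th observation; E has the epsilons as columns.\<close>
definition IO_feasible ::
  "real^'n^'m \<Rightarrow> real^'m \<Rightarrow> real^'n^'p \<Rightarrow> real^'p \<Rightarrow> (real^'n \<Rightarrow> real)
     \<Rightarrow> ('k::finite \<Rightarrow> real^'n) \<Rightarrow> bool" where
  "IO_feasible A b W q N X \<longleftrightarrow>
     (\<exists>(c::real^'n) (y::real^'m) (E::real^'k^'n) (z::real^'n).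
        (\<forall>i. (A *v z)$i \<ge> b$i) \<and>
        (\<forall>l. (W *v z)$l \<ge> q$l) \<and>
        c \<bullet> z = b \<bullet> y \<and>
        (\<forall>k. z = X k - column k E) \<and>
        transpose A *v y = c \<and>
        N c = 1 \<and>
        (\<forall>i. y$i \<ge> 0))"

end

theory Submission
  imports Defs
begin

lemma mv_lin: "((A::real^'n^'m) *v ((1 - t) *\<^sub>R x + t *\<^sub>R y))$i = (1 - t) * (A *v x)$i + t * (A *v y)$i"
  by (simp add: matrix_vector_right_distrib matrix_vector_mult_scaleR)

theorem proposition2:
  fixes A :: "real^'n^'m" and b :: "real^'m"
    and W :: "real^'n^'p" and q :: "real^'p"
    and N :: "real^'n \<Rightarrow> real"
    and X :: "'k::finite \<Rightarrow> real^'n"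
  assumes "is_norm N"
    and "feasible_region A b W q \<noteq> {}"
    and "interior (feasible_region A b W q) \<noteq> {}"
    and "no_redundant_constraints A b W q"
  shows "IO_feasible A b W q N X"
proof -
  obtain j :: 'm where True by simp
  obtain x1 where x1: "x1 \<in> feasible_region A b W q" using assms(2) by blast
  have "region_without_relevant A b W q j \<noteq> feasible_region A b W q"
    using assms(4) unfolding no_redundant_constraints_def by blast
  moreover have "feasible_region A b W q \<subseteq> region_without_relevant A b W q j"
    unfolding feasible_region_def region_without_relevant_def by auto
  ultimately obtain x2 where x2: "x2 \<in> region_without_relevant A b W q j"
    "x2 \<notin> feasible_region A b W q" by blast
  have x2j: "(A *v x2)$j < b$j" using x2 unfolding feasible_region_def region_without_relevant_def
    by (auto simp: not_le)
  have x1j: "(A *v x1)$j \<ge> b$j" using x1 unfolding feasible_region_def by auto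
  define t where "t = ((A *v x1)$j - b$j) / ((A *v x1)$j - (A *v x2)$j)"
  have t0: "0 \<le> t" and t1: "t \<le> 1" using x1j x2j unfolding t_def by (auto simp: divide_simps)
  define z where "z = (1 - t) *\<^sub>R x1 + t *\<^sub>R x2"
  have gen: "\<And>u v w::real. w \<le> u \<Longrightarrow> v < w \<Longrightarrow>
      (1 - (u - w) / (u - v)) * u + (u - w) / (u - v) * v = w"
  proof -
    fix u v w :: real assume "w \<le> u" "v < w"
    then have "u - v \<noteq> 0" by simp
    then show "(1 - (u - w) / (u - v)) * u + (u - w) / (u - v) * v = w"
    proof -
      have "(u - w) / (u - v) * (u - v) = u - w" using \<open>u - v \<noteq> 0\<close> by simp
      moreover have "(1 - (u - w) / (u - v)) * u + (u - w) / (u - v) * v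
          = u - (u - w) / (u - v) * (u - v)" by (simp add: left_diff_distrib right_diff_distrib)
      ultimately show ?thesis by simp
    qed
  qed
  have zj: "(A *v z)$j = b$j" unfolding z_def mv_lin t_def using gen[OF x1j x2j] .
  have zA: "\<forall>i. (A *v z)$i \<ge> b$i"
  proof
    fix i show "(A *v z)$i \<ge> b$i"
    proof (cases "i = j")
      case True then show ?thesis using zj by simp
    next
      case False
      have a: "(A *v x1)$i \<ge> b$i" using x1 unfolding feasible_region_def by auto
      have c: "(A *v x2)$i \<ge> b$i" using x2 False unfolding region_without_relevant_def by auto
      have "(1 - t) * (A *v x1)$i + t * (A *v x2)$i \<ge> (1 - t) * b$i + t * b$i"
        using a c t0 t1 by (intro add_mono mult_left_mono) auto
      then show ?thesis unfolding z_def mv_lin by (simp add: algebra_simps)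
    qed
  qed
  have zW: "\<forall>l. (W *v z)$l \<ge> q$l"
  proof
    fix l
    have a: "(W *v x1)$l \<ge> q$l" using x1 unfolding feasible_region_def by auto
    have c: "(W *v x2)$l \<ge> q$l" using x2 unfolding region_without_relevant_def by auto
    have "(1 - t) * (W *v x1)$l + t * (W *v x2)$l \<ge> (1 - t) * q$l + t * q$l"
      using a c t0 t1 by (intro add_mono mult_left_mono) auto
    then show "(W *v z)$l \<ge> q$l" unfolding z_def mv_lin by (simp add: algebra_simps)
  qed
  have rowdot: "\<And>v. (A *v v)$j = A$j \<bullet> v"
    by (simp add: matrix_vector_mult_def inner_vec_def mult.commute)
  have aj: "A$j \<noteq> 0"
  proof
    assume h: "A$j = 0"
    then have "(A *v x2)$j = 0" using rowdot by simp
    moreover have "(A *v x1)$j = 0" using h rowdot by simp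
    ultimately have "b$j \<le> 0" "0 < b$j" using x1j x2j by auto
    then show False by simp
  qed
  have Npos: "N (A$j) > 0"
  proof -
    have "N (A$j) \<ge> 0" "N (A$j) \<noteq> 0" using assms(1) aj unfolding is_norm_def by auto
    then show ?thesis by linarith
  qed
  define c where "c = (1 / N (A$j)) *\<^sub>R A$j"
  define y :: "real^'m" where "y = (1 / N (A$j)) *\<^sub>R axis j 1"
  define E :: "real^'k^'n" where "E = (\<chi> i k. (X k - z)$i)"
  have "N c = 1"
  proof -
    have "N c = \<bar>1 / N (A$j)\<bar> * N (A$j)" using assms(1) unfolding is_norm_def c_def by blast
    then show ?thesis using Npos by simp
  qed
  moreover have "transpose A *v y = c"
    unfolding y_def c_def
    by (simp add: vec_eq_iff matrix_vector_mult_def transpose_def axis_def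
        if_distrib[where f="\<lambda>x. a * x" for a] sum.delta cong: if_cong)
  moreover have "c \<bullet> z = b \<bullet> y"
    unfolding c_def y_def using zj rowdot[of z]
    by (simp add: inner_axis)
  moreover have "\<forall>k. z = X k - column k E"
    by (simp add: E_def column_def vec_eq_iff)
  moreover have "\<forall>i. y$i \<ge> 0" using Npos by (simp add: y_def axis_def)
  ultimately show ?thesis unfolding IO_feasible_def using zA zW by blast
qed

end
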